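(* In the Gödel setting described in the context, let $(A,B,R)$ be a $\top$-normalized fuzzy context and $(g,f)\in\mathcal{F}_N$ such that for every $a\in A$ there exists $b\in B$ with $g(b)>R(a,b)$. Then $f^{\downarrow}(b)\le g^{\uparrow\downarrow}(b)$ for all $b\in B$; consequently, in the fuzzy concept lattice, $\langle f^{\downarrow},f^{\downarrow\uparrow}\rangle\preceq\langle g^{\uparrow\downarrow},g^{\uparrow}\rangle$.
   Context: Gödel setting: all truth-value sets are $[0,1]$ with the usual order, $x\&y=\min\{x,y\}$, and $z\swarrow y=z\nwarrow y$ equals $1$ if $y\le z$ and $z$ otherwise. A fuzzy context is $(A,B,R)$ with nonempty finite sets $A,B$ and $R\colon A\times B\to[0,1]$. For $g\colon B\to[0,1]$, $f\colon A\to[0,1]$: $g^{\uparrow}(a)=\inf_{b\in B}(R(a,b)\swarrow g(b))$, $f^{\downarrow}(b)=\inf_{a\in A}(R(a,b)\nwarrow f(a))$, $g^{\uparrow_N}(a)=\inf_{b\in B}(g(b)\swarrow R(a,b))$, $f^{\downarrow^N}(b)=\inf_{a\in A}(f(a)\nwarrow R(a,b))$, $g^{\uparrow_\pi}(a)=\sup_{b\in B}\min\{R(a,b),g(b)\}$. $\mathcal{F}_N=\{(g,f)\mid g^{\uparrow_N}=f,\ f^{\downarrow^N}=g\}$. A (fuzzy) concept is a pair $\langle g,f\rangle$ with $g^\uparrow=f$, $f^\downarrow=g$, ordered by $\langle g_1,f_1\rangle\preceq\langle g_2,f_2\rangle$ iff $g_1\le g_2$ pointwise. The context is normalized if no row $R(a,\cdot)$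 and no column $R(\cdot,b)$ is identically $0$, and no row and no column has all values different from $0$; it is $\top$-normalized if moreover for every $a\in A$ there is $b_a\in B$ with $R(a,b_a)=1$. *)

theory Defs
  imports Complex_Main
begin

text \<open>Goedel residuum on [0,1]: z swarrow y = z nwarrow y = (if y \<le> z then 1 else z).\<close>
definition gres :: "real \<Rightarrow> real \<Rightarrow> real" where
  "gres z y = (if y \<le> z then 1 else z)"

definition fuzzy_context :: "'a set \<Rightarrow> 'b set \<Rightarrow> ('a \<Rightarrow> 'b \<Rightarrow> real) \<Rightarrow> bool" where
  "fuzzy_context A B R \<longleftrightarrow> finite A \<and> finite B \<and> A \<noteq> {} \<and> B \<noteq> {} \<and>
     (\<forall>a\<in>A. \<forall>b\<in>B. 0 \<le> R a b \<and> R a b \<le> 1)"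

definition fuzzy_set_on :: "'c set \<Rightarrow> ('c \<Rightarrow> real) \<Rightarrow> bool" where
  "fuzzy_set_on X h \<longleftrightarrow> (\<forall>x\<in>X. 0 \<le> h x \<and> h x \<le> 1)"

definition normalized :: "'a set \<Rightarrow> 'b set \<Rightarrow> ('a \<Rightarrow> 'b \<Rightarrow> real) \<Rightarrow> bool" where
  "normalized A B R \<longleftrightarrow>
     (\<forall>a\<in>A. \<exists>b\<in>B. R a b \<noteq> 0) \<and> (\<forall>b\<in>B. \<exists>a\<in>A. R a b \<noteq> 0) \<and>
     (\<forall>a\<in>A. \<exists>b\<in>B. R a b = 0) \<and> (\<forall>b\<in>B. \<exists>a\<in>A. R a b = 0)"

definition top_normalized :: "'a set \<Rightarrow> 'b set \<Rightarrow> ('a \<Rightarrow> 'b \<Rightarrow> real) \<Rightarrow> bool" where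
  "top_normalized A B R \<longleftrightarrow> normalized A B R \<and> (\<forall>a\<in>A. \<exists>b\<in>B. R a b = 1)"

definition up :: "'b set \<Rightarrow> ('a \<Rightarrow> 'b \<Rightarrow> real) \<Rightarrow> ('b \<Rightarrow> real) \<Rightarrow> 'a \<Rightarrow> real" where
  "up B R g a = (INF b\<in>B. gres (R a b) (g b))"

definition down :: "'a set \<Rightarrow> ('a \<Rightarrow> 'b \<Rightarrow> real) \<Rightarrow> ('a \<Rightarrow> real) \<Rightarrow> 'b \<Rightarrow> real" where
  "down A R f b = (INF a\<in>A. gres (R a b) (f a))"

definition upN :: "'b set \<Rightarrow> ('a \<Rightarrow> 'b \<Rightarrow> real) \<Rightarrow> ('b \<Rightarrow> real) \<Rightarrow> 'a \<Rightarrow> real" where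
  "upN B R g a = (INF b\<in>B. gres (g b) (R a b))"

definition downN :: "'a set \<Rightarrow> ('a \<Rightarrow> 'b \<Rightarrow> real) \<Rightarrow> ('a \<Rightarrow> real) \<Rightarrow> 'b \<Rightarrow> real" where
  "downN A R f b = (INF a\<in>A. gres (f a) (R a b))"

definition F_N :: "'a set \<Rightarrow> 'b set \<Rightarrow> ('a \<Rightarrow> 'b \<Rightarrow> real) \<Rightarrow> (('b \<Rightarrow> real) \<times> ('a \<Rightarrow> real)) set" where
  "F_N A B R = {(g, f). fuzzy_set_on B g \<and> fuzzy_set_on A f \<and>
      (\<forall>a\<in>A. upN B R g a = f a) \<and> (\<forall>b\<in>B. downN A R f b = g b)}"

definition is_concept :: "'a set \<Rightarrow> 'b set \<Rightarrow> ('a \<Rightarrow> 'b \<Rightarrow> real) \<Rightarrow> ('b \<Rightarrow> real) \<Rightarrow> ('a \<Rightarrow> real) \<Rightarrow> bool" where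
  "is_concept A B R g f \<longleftrightarrow> fuzzy_set_on B g \<and> fuzzy_set_on A f \<and>
      (\<forall>a\<in>A. up B R g a = f a) \<and> (\<forall>b\<in>B. down A R f b = g b)"

definition concept_le :: "'b set \<Rightarrow> ('b \<Rightarrow> real) \<times> ('a \<Rightarrow> real) \<Rightarrow> ('b \<Rightarrow> real) \<times> ('a \<Rightarrow> real) \<Rightarrow> bool" where
  "concept_le B c1 c2 \<longleftrightarrow> (\<forall>b\<in>B. fst c1 b \<le> fst c2 b)"

end

theory Submission
  imports Defs
begin

lemma gres_ge_iff: "x \<le> 1 \<Longrightarrow> (x \<le> gres z y) \<longleftrightarrow> min x y \<le> z"
  by (auto simp: gres_def)

lemma gres_range: "0 \<le> z \<Longrightarrow> z \<le> 1 \<Longrightarrow> 0 \<le> gres z y \<and> gres z y \<le> 1"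
  by (auto simp: gres_def)

lemma gres_anti: "z \<le> 1 \<Longrightarrow> y1 \<le> y2 \<Longrightarrow> gres z y2 \<le> gres z y1"
  by (auto simp: gres_def)

lemma inf_ge_iff:
  fixes F :: "'c \<Rightarrow> real"
  assumes "finite X" "X \<noteq> {}"
  shows "(x \<le> (INF b\<in>X. F b)) \<longleftrightarrow> (\<forall>b\<in>X. x \<le> F b)"
proof
  assume "x \<le> (INF b\<in>X. F b)"
  moreover have "\<forall>b\<in>X. (INF b\<in>X. F b) \<le> F b"
    using assms by (auto intro: cINF_lower bdd_below_finite)
  ultimately show "\<forall>b\<in>X. x \<le> F b" by force
next
  assume "\<forall>b\<in>X. x \<le> F b"
  then show "x \<le> (INF b\<in>X. F b)" using assms by (auto intro: cINF_greatest)
qed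

lemma inf_le:
  fixes F :: "'c \<Rightarrow> real"
  assumes "finite X" "b \<in> X"
  shows "(INF b\<in>X. F b) \<le> F b"
  using assms by (auto intro: cINF_lower bdd_below_finite)

lemma inf_range:
  fixes F :: "'c \<Rightarrow> real"
  assumes "finite X" "X \<noteq> {}" "\<forall>b\<in>X. 0 \<le> F b \<and> F b \<le> 1"
  shows "0 \<le> (INF b\<in>X. F b) \<and> (INF b\<in>X. F b) \<le> 1"
proof -
  obtain b where "b \<in> X" using assms by auto
  then show ?thesis using assms inf_ge_iff[of X 0 F] inf_le[of X b F] by auto
qed

lemma down_up: "down A R f = up A (\<lambda>b a. R a b) f"
  by (simp add: down_def up_def fun_eq_iff)

lemma up_range:
  assumes "finite X" "X \<noteq> {}" "\<forall>b\<in>X. 0 \<le> R y b \<and> R y b \<le> 1"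
  shows "0 \<le> up X R g y \<and> up X R g y \<le> 1"
  unfolding up_def by (rule inf_range) (use assms gres_range in auto)

lemma up_anti:
  assumes "finite X" "X \<noteq> {}" "\<forall>b\<in>X. R y b \<le> 1" "\<forall>b\<in>X. g1 b \<le> g2 b"
  shows "up X R g2 y \<le> up X R g1 y"
  unfolding up_def
  using assms by (intro cINF_mono) (auto intro: gres_anti bdd_below_finite)

lemma up_ext:
  assumes "finite X" "X \<noteq> {}" "finite Y" "Y \<noteq> {}"
    "\<forall>a\<in>Y. \<forall>b\<in>X. 0 \<le> R a b \<and> R a b \<le> 1" "\<forall>a\<in>Y. h a \<le> 1" "a \<in> Y"
  shows "h a \<le> up X R (up Y (\<lambda>b a. R a b) h) a"
proof -
  have "\<forall>b\<in>X. h a \<le> gres (R a b) (up Y (\<lambda>b a. R a b) h b)"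
  proof
    fix b assume b: "b \<in> X"
    have u: "up Y (\<lambda>b a. R a b) h b \<le> gres (R a b) (h a)"
      unfolding up_def using assms by (intro inf_le) auto
    have "up Y (\<lambda>b a. R a b) h b \<le> 1" using up_range[of Y "\<lambda>b a. R a b" b h] assms b by auto
    then have "min (up Y (\<lambda>b a. R a b) h b) (h a) \<le> R a b" using u gres_ge_iff by blast
    then show "h a \<le> gres (R a b) (up Y (\<lambda>b a. R a b) h b)"
      using gres_ge_iff assms by (simp add: min.commute)
  qed
  then show ?thesis unfolding up_def by (rule inf_ge_iff[OF assms(1,2), THEN iffD2])
qed

lemma up_min1:
  assumes "\<forall>b\<in>X. R y b \<le> 1"
  shows "up X R (\<lambda>b. min (g b) 1) y = up X R g y"
  unfolding up_def using assms by (intro INF_cong) (auto simp: gres_def min_def)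

lemma up_cong:
  assumes "\<forall>b\<in>X. g1 b = g2 b"
  shows "up X R g1 y = up X R g2 y"
  unfolding up_def using assms by (intro INF_cong) auto

lemma up_closed:
  assumes "finite X" "X \<noteq> {}" "finite Y" "Y \<noteq> {}"
    "\<forall>a\<in>Y. \<forall>b\<in>X. 0 \<le> R a b \<and> R a b \<le> 1" "a \<in> Y"
  shows "up X R (up Y (\<lambda>b a. R a b) (up X R g)) a = up X R g a"
proof (rule antisym)
  define g' where "g' = (\<lambda>b. min (g b) 1)"
  have e: "up X R g' y = up X R g y" if "y \<in> Y" for y
    unfolding g'_def using up_min1[of X R y g] assms(5) that by auto
  have e2: "up Y (\<lambda>b a. R a b) (up X R g') b = up Y (\<lambda>b a. R a b) (up X R g) b" for b
    using e by (intro up_cong) auto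
  have "\<forall>b\<in>X. g' b \<le> up Y (\<lambda>b a. R a b) (up X R g') b"
  proof
    fix b assume "b \<in> X"
    then show "g' b \<le> up Y (\<lambda>b a. R a b) (up X R g') b"
      by (intro up_ext[OF assms(3,4,1,2)]) (use assms(5) in \<open>auto simp: g'_def\<close>)
  qed
  then have H: "\<forall>b\<in>X. g' b \<le> up Y (\<lambda>b a. R a b) (up X R g) b"
    using e2 assms by auto
  have "up X R (up Y (\<lambda>b a. R a b) (up X R g)) a \<le> up X R g' a"
    by (rule up_anti[OF assms(1,2) _ H]) (use assms in auto)
  then show "up X R (up Y (\<lambda>b a. R a b) (up X R g)) a \<le> up X R g a"
    using e assms by auto
  show "up X R g a \<le> up X R (up Y (\<lambda>b a. R a b) (up X R g)) a"
  proof -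
    have "\<forall>a\<in>Y. up X R g a \<le> 1" using up_range[OF assms(1,2), of R _ g] assms(5) by blast
    then show ?thesis by (rule up_ext[OF assms(1,2,3,4,5) _ assms(6)])
  qed
qed

theorem mainTheorem15:
  fixes A :: "'a set" and B :: "'b set" and R :: "'a \<Rightarrow> 'b \<Rightarrow> real"
    and g :: "'b \<Rightarrow> real" and f :: "'a \<Rightarrow> real"
  assumes ctx: "fuzzy_context A B R"
    and tn: "top_normalized A B R"
    and FN: "(g, f) \<in> F_N A B R"
    and gt: "\<forall>a\<in>A. \<exists>b\<in>B. g b > R a b"
  shows "(\<forall>b\<in>B. down A R f b \<le> down A R (up B R g) b)
    \<and> is_concept A B R (down A R f) (up B R (down A R f))
    \<and> is_concept A B R (down A R (up B R g)) (up B R g)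
    \<and> concept_le B (down A R f, up B R (down A R f)) (down A R (up B R g), up B R g)"
proof -
  have A: "finite A" "A \<noteq> {}" and B: "finite B" "B \<noteq> {}"
    and Rr: "\<forall>a\<in>A. \<forall>b\<in>B. 0 \<le> R a b \<and> R a b \<le> 1"
    using ctx by (auto simp: fuzzy_context_def)
  have Rr': "\<forall>b\<in>B. \<forall>a\<in>A. 0 \<le> R a b \<and> R a b \<le> 1" using Rr by auto
  have gdef: "\<forall>b\<in>B. downN A R f b = g b" using FN by (auto simp: F_N_def)
  have key: "up B R g a \<le> f a" if a: "a \<in> A" for a
  proof -
    obtain b where b: "b \<in> B" "g b > R a b" using gt a by auto
    have "g b \<le> gres (f a) (R a b)"
      using gdef b a A unfolding downN_def by (metis inf_le)
    then have "R a b \<le> f a" using b by (auto simp: gres_def split: if_splits)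
    moreover have "up B R g a \<le> gres (R a b) (g b)"
      unfolding up_def using B b by (intro inf_le) auto
    ultimately show ?thesis using b by (auto simp: gres_def)
  qed
  have P1: "\<forall>b\<in>B. down A R f b \<le> down A R (up B R g) b"
    unfolding down_up using A Rr key by (intro ballI up_anti) auto
  have rng_down: "0 \<le> down A R h b \<and> down A R h b \<le> 1" if "b \<in> B" for h b
    unfolding down_up using up_range[of A "\<lambda>b a. R a b" b] A Rr that by auto
  have rng_up: "0 \<le> up B R h a \<and> up B R h a \<le> 1" if "a \<in> A" for h a
    using up_range[of B R a] B Rr that by auto
  have cl1: "down A R (up B R (down A R h)) b = down A R h b" if "b \<in> B" for h b
    unfolding down_up using up_closed[of A B "\<lambda>b a. R a b" b h] A B Rr' that by simp
  have cl2: "up B R (down A R (up B R h)) a = up B R h a" if "a \<in> A" for h a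
    unfolding down_up using up_closed[of B A R a h] A B Rr that by simp
  have C1: "is_concept A B R (down A R f) (up B R (down A R f))"
    unfolding is_concept_def fuzzy_set_on_def using rng_down rng_up cl1 by auto
  have C2: "is_concept A B R (down A R (up B R g)) (up B R g)"
    unfolding is_concept_def fuzzy_set_on_def using rng_down rng_up cl2 by auto
  show ?thesis using P1 C1 C2 by (auto simp: concept_le_def)
qed

end
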